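(* Let $u,v\in X_0^+(2r)$, $d:=\min\{d(u),d(v)\}$, $\hat u:=u+d\cdot e$, $\hat v:=v+d\cdot e$, where $e=(0,\dots,0,1,\dots,1)\in\mathbb Z^{2r}$ has zeros in the first $r$ and ones in the last $r$ components. Then $(u,v)$ satisfies (4.2) if and only if $d(\hat u)=0$ (for even $r$), respectively $d(\hat v)=0$ (for odd $r$), and $$\theta_i'(\hat v)\prec\theta_i(\hat u)\quad\text{for } i=1,2.$$
   Context: $X^+(N):=\{x\in\mathbb Z^N:x_1\ge\dots\ge x_N\}$, $X_0^+(N):=\{x\in X^+(N):x_i+x_{N+1-i}\text{ independent of } i\}$. For $y\in X_0^+(2r)$ the defect is $d(y):=y_r-y_{r+1}$, and $X_{sp}(2r):=\{y\in X_0^+(2r):d(y)=0\}$. A pair $(u,v)$ with $u,v\in X_0^+(2r)$ satisfies (4.2) if $u_{2\rho-1}\ge v_{2\rho-1}\ge v_{2\rho}\ge u_{2\rho}$ for $\rho=1,\dots,r$. For $\beta\in\mathbb Z^r$, $\alpha\in\mathbb Z^{r+1}$, write $\beta\prec\alpha$ if $\alpha_\rho\ge\beta_\rho\ge\alpha_{\rho+1}$ for $\rho=1,\dots,r$. Splitting maps: for even $r$, $y\in X_{sp}(2r)$, $z\in X_0^+(2r)$: $\theta_1(y):=(y_1,y_2,y_4,\dots,y_r,y_{r+3},y_{r+5},\dots,y_{2r-1},y_{2r})$, $\theta_2(y):=(y_1,y_3,\dots,y_{r-1},y_{r+1},y_{r+2},y_{r+4},\dots,y_{2r})$, $\theta_1'(z):=(z_2,z_4,\dots,z_r,z_{r+1},z_{r+3},\dots,z_{2r-1})$,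 $\theta_2'(z):=(z_1,z_3,\dots,z_{r-1},z_{r+2},z_{r+4},\dots,z_{2r})$. For odd $r$, $z\in X_0^+(2r)$, $y\in X_{sp}(2r)$: $\theta_1(z):=(z_1,z_2,z_4,\dots,z_{r-1},z_{r+2},z_{r+4},\dots,z_{2r-1},z_{2r})$, $\theta_2(z):=(z_1,z_3,\dots,z_r,z_{r+1},z_{r+3},\dots,z_{2r})$, $\theta_1'(y):=(y_2,y_4,\dots,y_{r+1},y_{r+2},y_{r+4},\dots,y_{2r-1})$, $\theta_2'(y):=(y_1,y_3,\dots,y_r,y_{r+3},y_{r+5},\dots,y_{2r})$. For $r=1$: $\theta_i(z)=z$, $\theta_i'(y)=y_1$. (So for even $r$, $\theta$ is applied only to weights of defect $0$; for odd $r$, $\theta'$ only to weights of defect $0$.) *)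

theory Defs
  imports Main
begin

text \<open>Elements of Z^N are integer lists of length N; components are indexed 1-based.\<close>

definition ent :: "int list \<Rightarrow> nat \<Rightarrow> int" where
  "ent x i = x ! (i - 1)"

definition Xplus :: "nat \<Rightarrow> int list set" where
  "Xplus N = {x. length x = N \<and> (\<forall>i j. 1 \<le> i \<and> i \<le> j \<and> j \<le> N \<longrightarrow> ent x j \<le> ent x i)}"

definition X0plus :: "nat \<Rightarrow> int list set" where
  "X0plus N = {x \<in> Xplus N. \<forall>i j. 1 \<le> i \<and> i \<le> N \<and> 1 \<le> j \<and> j \<le> N \<longrightarrow>
       ent x i + ent x (N + 1 - i) = ent x j + ent x (N + 1 - j)}"

definition defect :: "nat \<Rightarrow> int list \<Rightarrow> int" where
  "defect r y = ent y r - ent y (r + 1)"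

definition Xsp :: "nat \<Rightarrow> int list set" where
  "Xsp r = {y \<in> X0plus (2 * r). defect r y = 0}"

definition cond42 :: "nat \<Rightarrow> int list \<Rightarrow> int list \<Rightarrow> bool" where
  "cond42 r u v \<longleftrightarrow> (\<forall>\<rho>\<in>{1..r}.
      ent u (2*\<rho>-1) \<ge> ent v (2*\<rho>-1) \<and> ent v (2*\<rho>-1) \<ge> ent v (2*\<rho>) \<and> ent v (2*\<rho>) \<ge> ent u (2*\<rho>))"

definition interlace :: "int list \<Rightarrow> int list \<Rightarrow> bool" (infix "\<prec>" 50) where
  "\<beta> \<prec> \<alpha> \<longleftrightarrow> length \<alpha> = length \<beta> + 1 \<and>
     (\<forall>\<rho>\<in>{1..length \<beta>}. ent \<alpha> \<rho> \<ge> ent \<beta> \<rho> \<and> ent \<beta> \<rho> \<ge> ent \<alpha> (\<rho> + 1))"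

definition evec :: "nat \<Rightarrow> int list" where
  "evec r = replicate r 0 @ replicate r 1"

definition vadd :: "int list \<Rightarrow> int list \<Rightarrow> int list" where
  "vadd x y = map2 (+) x y"

definition vsmult :: "int \<Rightarrow> int list \<Rightarrow> int list" where
  "vsmult c x = map ((*) c) x"

text \<open>Splitting maps, given as lists of (1-based) selected indices.\<close>
definition sel :: "int list \<Rightarrow> nat list \<Rightarrow> int list" where
  "sel y idx = map (ent y) idx"

definition theta_idx :: "nat \<Rightarrow> nat \<Rightarrow> nat list" where
  "theta_idx r i =
    (if r = 1 then [1, 2]
     else if even r then
       (if i = 1 then [1] @ map (\<lambda>k. 2*k) [1..<r div 2 + 1] @ map (\<lambda>k. r+1+2*k) [1..<r div 2] @ [2*r]
        else [1] @ map (\<lambda>k. 2*k+1) [1..<r div 2] @ [r+1] @ map (\<lambda>k. r+2*k) [1..<r div 2 + 1])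
     else
       (if i = 1 then [1] @ map (\<lambda>k. 2*k) [1..<(r-1) div 2 + 1] @ map (\<lambda>k. r+2*k) [1..<(r-1) div 2 + 1] @ [2*r]
        else map (\<lambda>k. 2*k-1) [1..<(r+1) div 2 + 1] @ map (\<lambda>k. r+2*k-1) [1..<(r+1) div 2 + 1]))"

definition thetap_idx :: "nat \<Rightarrow> nat \<Rightarrow> nat list" where
  "thetap_idx r i =
    (if r = 1 then [1]
     else if even r then
       (if i = 1 then map (\<lambda>k. 2*k) [1..<r div 2 + 1] @ map (\<lambda>k. r+2*k-1) [1..<r div 2 + 1]
        else map (\<lambda>k. 2*k-1) [1..<r div 2 + 1] @ map (\<lambda>k. r+2*k) [1..<r div 2 + 1])
     else
       (if i = 1 then map (\<lambda>k. 2*k) [1..<(r+1) div 2 + 1] @ map (\<lambda>k. r+2*k) [1..<(r-1) div 2 + 1]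
        else map (\<lambda>k. 2*k-1) [1..<(r+1) div 2 + 1] @ map (\<lambda>k. r+1+2*k) [1..<(r-1) div 2 + 1]))"

definition theta :: "nat \<Rightarrow> nat \<Rightarrow> int list \<Rightarrow> int list" where
  "theta r i z = sel z (theta_idx r i)"

definition thetap :: "nat \<Rightarrow> nat \<Rightarrow> int list \<Rightarrow> int list" where
  "thetap r i z = sel z (thetap_idx r i)"

lemma "theta_idx 4 1 = [1,2,4,7,8]" "theta_idx 4 2 = [1,3,5,6,8]"
      "thetap_idx 4 1 = [2,4,5,7]" "thetap_idx 4 2 = [1,3,6,8]"
      "theta_idx 2 1 = [1,2,4]" "theta_idx 2 2 = [1,3,4]"
      "thetap_idx 2 1 = [2,3]" "thetap_idx 2 2 = [1,4]"
      "theta_idx 5 1 = [1,2,4,7,9,10]" "theta_idx 5 2 = [1,3,5,6,8,10]"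
      "thetap_idx 5 1 = [2,4,6,7,9]" "thetap_idx 5 2 = [1,3,5,8,10]"
      "theta_idx 3 1 = [1,2,5,6]" "theta_idx 3 2 = [1,3,4,6]"
      "thetap_idx 3 1 = [2,4,5]" "thetap_idx 3 2 = [1,3,6]"
  by (simp_all add: theta_idx_def thetap_idx_def upt_rec)

end

theory Submission
  imports Defs
begin

lemma len_theta_even: "m\<ge>1 \<Longrightarrow> length (theta_idx (2*m) i) = 2*m+1"
  by (simp add: theta_idx_def)
lemma len_thetap_even: "m\<ge>1 \<Longrightarrow>length (thetap_idx (2*m) i) = 2*m"
  by (simp add: thetap_idx_def)
lemma len_theta_odd: "length (theta_idx (2*m+1) i) = 2*m+2"
  by (simp add: theta_idx_def)
lemma len_thetap_odd: "length (thetap_idx (2*m+1) i) = 2*m+1"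
  by (simp add: thetap_idx_def)

lemma te1: "r = 2*m \<Longrightarrow> m \<ge> 1 \<Longrightarrow> k < 2*m+1 \<Longrightarrow> theta_idx r 1 ! k = (if k = 0 then 1 else if k \<le> m then 2*k else if k < 2*m then 2*k+1 else 4*m)"
  by (auto simp add: theta_idx_def nth_append nth_Cons')
lemma te2: "r = 2*m \<Longrightarrow> m \<ge> 1 \<Longrightarrow> k < 2*m+1 \<Longrightarrow> theta_idx r 2 ! k = (if k \<le> m then 2*k+1 else 2*k)"
  by (auto simp add: theta_idx_def nth_append nth_Cons')
lemma tpe1: "r = 2*m \<Longrightarrow> m \<ge> 1 \<Longrightarrow> k < 2*m \<Longrightarrow> thetap_idx r 1 ! k = (if k < m then 2*k+2 else 2*k+1)"
  by (auto simp add: thetap_idx_def nth_append nth_Cons')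
lemma tpe2: "r = 2*m \<Longrightarrow> m \<ge> 1 \<Longrightarrow> k < 2*m \<Longrightarrow> thetap_idx r 2 ! k = (if k < m then 2*k+1 else 2*k+2)"
  by (auto simp add: thetap_idx_def nth_append nth_Cons')

lemma to1: "r = 2*m+1 \<Longrightarrow> m \<ge> 1 \<Longrightarrow> k < 2*m+2 \<Longrightarrow> theta_idx r 1 ! k = (if k = 0 then 1 else if k \<le> m then 2*k else if k \<le> 2*m then 2*k+1 else 4*m+2)"
  by (auto simp add: theta_idx_def nth_append nth_Cons')
lemma to2: "r = 2*m+1 \<Longrightarrow> m \<ge> 1 \<Longrightarrow> k < 2*m+2 \<Longrightarrow> theta_idx r 2 ! k = (if k \<le> m then 2*k+1 else 2*k)"
  by (auto simp add: theta_idx_def nth_append nth_Cons')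
lemma tpo1: "r = 2*m+1 \<Longrightarrow> m \<ge> 1 \<Longrightarrow> k < 2*m+1 \<Longrightarrow> thetap_idx r 1 ! k = (if k \<le> m then 2*k+2 else 2*k+1)"
  by (auto simp add: thetap_idx_def nth_append nth_Cons')
lemma tpo2: "r = 2*m+1 \<Longrightarrow> m \<ge> 1 \<Longrightarrow> k < 2*m+1 \<Longrightarrow> thetap_idx r 2 ! k = (if k \<le> m then 2*k+1 else 2*k+2)"
  by (auto simp add: thetap_idx_def nth_append nth_Cons')

definition monoN :: "nat \<Rightarrow> (nat \<Rightarrow> int) \<Rightarrow> bool" where
  "monoN r P = (\<forall>i j. 1 \<le> i \<and> i \<le> j \<and> j \<le> 2*r \<longrightarrow> P j \<le> P i)"
definition Cpar :: "nat \<Rightarrow> (nat \<Rightarrow> int) \<Rightarrow> (nat \<Rightarrow> int) \<Rightarrow> bool" where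
  "Cpar r P Q = (\<forall>j. 1 \<le> j \<and> j \<le> 2*r \<longrightarrow> (odd j \<longrightarrow> Q j \<le> P j) \<and> (even j \<longrightarrow> P j \<le> Q j))"

lemma L1:
  assumes "monoN r P" "monoN r Q" "Cpar r P Q" "1 \<le> i" "i \<le> j" "j \<le> 2*r"
    "odd i \<or> odd j \<or> i+2 \<le> j"
  shows "Q j \<le> P i"
proof -
  obtain l where l: "i \<le> l" "l \<le> j" "odd l"
  proof (cases "odd i")
    case True then show ?thesis using that[of i] assms(5) by auto
  next
    case False
    show ?thesis
    proof (cases "odd j")
      case True then show ?thesis using that[of j] assms(5) by auto
    next
      case F2: False
      then show ?thesis using that[of "i+1"] False assms(7) by auto
    qed
  qed
  have "Q j \<le> Q l" using assms(2,4,6) l unfolding monoN_def by auto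
  also have "\<dots> \<le> P l" using assms(3,4,6) l unfolding Cpar_def by auto
  also have "\<dots> \<le> P i" using assms(1,4,6) l unfolding monoN_def by auto
  finally show ?thesis .
qed

lemma L2:
  assumes "monoN r P" "monoN r Q" "Cpar r P Q" "1 \<le> i" "i \<le> j" "j \<le> 2*r"
    "even i \<or> even j \<or> i+2 \<le> j"
  shows "P j \<le> Q i"
proof -
  obtain l where l: "i \<le> l" "l \<le> j" "even l"
  proof (cases "even i")
    case True then show ?thesis using that[of i] assms(5) by auto
  next
    case False
    show ?thesis
    proof (cases "even j")
      case True then show ?thesis using that[of j] assms(5) by auto
    next
      case F2: False
      then show ?thesis using that[of "i+1"] False assms(7) by auto
    qed
  qed
  have "P j \<le> P l" using assms(1,4,6) l unfolding monoN_def by auto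
  also have "\<dots> \<le> Q l" using assms(3,4,6) l unfolding Cpar_def by auto
  also have "\<dots> \<le> Q i" using assms(2,4,6) l unfolding monoN_def by auto
  finally show ?thesis .
qed

lemma fwd_gen:
  assumes "monoN r P" "monoN r Q" "Cpar r P Q" "1 \<le> a" "a \<le> c" "c \<le> b" "b \<le> 2*r"
    "odd a \<or> odd c \<or> a+2 \<le> c" "even c \<or> even b \<or> c+2 \<le> b"
  shows "Q c \<le> P a \<and> P b \<le> Q c"
  using L1[OF assms(1-3), of a c] L2[OF assms(1-3), of c b] assms(4-) by auto

lemma fwd_even:
  assumes "r = 2*m" "m \<ge> 1" "monoN r P" "monoN r Q" "Cpar r P Q" "i \<in> {1,2}" "k < r"
  shows "Q (thetap_idx r i ! k) \<le> P (theta_idx r i ! k) \<and>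
         P (theta_idx r i ! Suc k) \<le> Q (thetap_idx r i ! k)"
proof -
  from assms(6) consider "i = 1" | "i = 2" by blast
  then show ?thesis
  proof cases
    case 1
    have e: "theta_idx r i ! k = (if k = 0 then 1 else if k \<le> m then 2*k else if k < 2*m then 2*k+1 else 4*m)"
            "theta_idx r i ! Suc k = (if Suc k = 0 then 1 else if Suc k \<le> m then 2*Suc k else if Suc k < 2*m then 2*Suc k+1 else 4*m)"
            "thetap_idx r i ! k = (if k < m then 2*k+2 else 2*k+1)"
      using te1[OF assms(1,2)] tpe1[OF assms(1,2)] assms(7,1) 1 by auto
    show ?thesis unfolding e by (rule fwd_gen[OF assms(3-5)]) (use assms(1,2,7) in auto)
  next
    case 2
    have e: "theta_idx r i ! k = (if k \<le> m then 2*k+1 else 2*k)"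
            "theta_idx r i ! Suc k = (if Suc k \<le> m then 2*Suc k+1 else 2*Suc k)"
            "thetap_idx r i ! k = (if k < m then 2*k+1 else 2*k+2)"
      using te2[OF assms(1,2)] tpe2[OF assms(1,2)] assms(7,1) 2 by auto
    show ?thesis unfolding e by (rule fwd_gen[OF assms(3-5)]) (use assms(1,2,7) in auto)
  qed
qed

lemma fwd_odd:
  assumes "r = 2*m+1" "m \<ge> 1" "monoN r P" "monoN r Q" "Cpar r P Q" "i \<in> {1,2}" "k < r"
  shows "Q (thetap_idx r i ! k) \<le> P (theta_idx r i ! k) \<and>
         P (theta_idx r i ! Suc k) \<le> Q (thetap_idx r i ! k)"
proof -
  from assms(6) consider "i = 1" | "i = 2" by blast
  then show ?thesis
  proof cases
    case 1
    have e: "theta_idx r i ! k = (if k = 0 then 1 else if k \<le> m then 2*k else if k \<le> 2*m then 2*k+1 else 4*m+2)"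
            "theta_idx r i ! Suc k = (if Suc k = 0 then 1 else if Suc k \<le> m then 2*Suc k else if Suc k \<le> 2*m then 2*Suc k+1 else 4*m+2)"
            "thetap_idx r i ! k = (if k \<le> m then 2*k+2 else 2*k+1)"
      using to1[OF assms(1,2)] tpo1[OF assms(1,2)] assms(7,1) 1 by auto
    show ?thesis unfolding e by (rule fwd_gen[OF assms(3-5)]) (use assms(1,2,7) in auto)
  next
    case 2
    have e: "theta_idx r i ! k = (if k \<le> m then 2*k+1 else 2*k)"
            "theta_idx r i ! Suc k = (if Suc k \<le> m then 2*Suc k+1 else 2*Suc k)"
            "thetap_idx r i ! k = (if k \<le> m then 2*k+1 else 2*k+2)"
      using to2[OF assms(1,2)] tpo2[OF assms(1,2)] assms(7,1) 2 by auto
    show ?thesis unfolding e by (rule fwd_gen[OF assms(3-5)]) (use assms(1,2,7) in auto)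
  qed
qed

lemma bwd_even:
  assumes r: "r = 2*m" and m: "m \<ge> 1" and d: "P (2*m) = P (2*m+1)"
   and H: "\<And>i k. i \<in> {1,2} \<Longrightarrow> k < r \<Longrightarrow> Q (thetap_idx r i ! k) \<le> P (theta_idx r i ! k) \<and>
         P (theta_idx r i ! Suc k) \<le> Q (thetap_idx r i ! k)"
  shows "Cpar r P Q"
  unfolding Cpar_def
proof (intro allI impI conjI)
  fix j assume j: "1 \<le> j \<and> j \<le> 2*r"
  { assume "odd j"
    then obtain k where k: "j = 2*k+1" by (metis oddE)
    show "Q j \<le> P j"
    proof (cases "k < m")
      case True then show ?thesis using H[of 2 k] k te2[OF r m, of k] tpe2[OF r m, of k] r by simp
    next
      case False then show ?thesis using H[of 1 k] k j te1[OF r m, of k] tpe1[OF r m, of k] r d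
        by (auto split: if_splits)
    qed }
  { assume "even j"
    then obtain k where k: "j = 2*k+2" using j by (metis evenE One_nat_def Suc_1 add.commute add_Suc_right
        mult_Suc_right nat.exhaust_sel mult_0_right not_one_le_zero add_0)
    show "P j \<le> Q j"
    proof (cases "k < m")
      case True then show ?thesis using H[of 1 k] k te1[OF r m, of "Suc k"] tpe1[OF r m, of k] r by simp
    next
      case False then show ?thesis using H[of 2 k] k j te2[OF r m, of "Suc k"] tpe2[OF r m, of k] r by auto
    qed }
qed

lemma bwd_odd:
  assumes r: "r = 2*m+1" and m: "m \<ge> 1" and d: "Q (2*m+1) = Q (2*m+2)"
   and H: "\<And>i k. i \<in> {1,2} \<Longrightarrow> k < r \<Longrightarrow> Q (thetap_idx r i ! k) \<le> P (theta_idx r i ! k) \<and>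
         P (theta_idx r i ! Suc k) \<le> Q (thetap_idx r i ! k)"
  shows "Cpar r P Q"
  unfolding Cpar_def
proof (intro allI impI conjI)
  fix j assume j: "1 \<le> j \<and> j \<le> 2*r"
  { assume "odd j"
    then obtain k where k: "j = 2*k+1" by (metis oddE)
    show "Q j \<le> P j"
    proof (cases "k \<le> m")
      case True then show ?thesis using H[of 2 k] k to2[OF r m, of k] tpo2[OF r m, of k] r by simp
    next
      case False then show ?thesis using H[of 1 k] k j to1[OF r m, of k] tpo1[OF r m, of k] r by auto
    qed }
  { assume "even j"
    then obtain k where k: "j = 2*k+2" using j by (metis evenE One_nat_def Suc_1 add.commute add_Suc_right
        mult_Suc_right nat.exhaust_sel mult_0_right not_one_le_zero add_0)
    show "P j \<le> Q j"
    proof (cases "k < m")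
      case True then show ?thesis using H[of 1 k] k to1[OF r m, of "Suc k"] tpo1[OF r m, of k] r by simp
    next
      case False
      then show ?thesis using H[of 2 k] k j to2[OF r m, of "Suc k"] tpo2[OF r m, of k] r d
        by (cases "k = m") auto
    qed }
qed

lemma core:
  assumes r1: "r \<ge> 1" and mP: "monoN r P" and mQ: "monoN r Q"
    and mn: "min (P r - P (r+1)) (Q r - Q (r+1)) = 0"
  shows "Cpar r P Q \<longleftrightarrow>
    ((if even r then P r = P (r+1) else Q r = Q (r+1)) \<and>
     (\<forall>i\<in>{1,2}. \<forall>k<r. Q (thetap_idx r i ! k) \<le> P (theta_idx r i ! k) \<and>
         P (theta_idx r i ! Suc k) \<le> Q (thetap_idx r i ! k)))" (is "?L \<longleftrightarrow> ?R")
proof (cases "r = 1")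
  case True
  have e: "theta_idx r i ! 0 = 1" "theta_idx r i ! Suc 0 = 2" "thetap_idx r i ! 0 = 1" for i
    using True by (simp_all add: theta_idx_def thetap_idx_def)
  have L: "Q 2 \<le> Q 1" "P 2 \<le> P 1" using mQ mP True unfolding monoN_def by auto
  have cp: "Cpar r P Q \<longleftrightarrow> Q 1 \<le> P 1 \<and> P 2 \<le> Q 2"
  proof
    assume "Cpar r P Q" then show "Q 1 \<le> P 1 \<and> P 2 \<le> Q 2"
      unfolding Cpar_def using True by (metis dvd_refl le_numeral_extra(4) odd_one one_le_numeral mult_1_right order_refl)
  next
    assume h: "Q 1 \<le> P 1 \<and> P 2 \<le> Q 2"
    show "Cpar r P Q" unfolding Cpar_def
    proof (intro allI impI)
      fix j assume "1 \<le> j \<and> j \<le> 2*r"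
      then have "j = 1 \<or> j = 2" using True by auto
      then show "(odd j \<longrightarrow> Q j \<le> P j) \<and> (even j \<longrightarrow> P j \<le> Q j)" using h by auto
    qed
  qed
  have k: "(\<forall>k<r. X k) \<longleftrightarrow> X 0" for X using True by auto
  show ?thesis unfolding cp k e using True L mn by (auto simp: numeral_2_eq_2)
next
  case False
  then have r2: "r \<ge> 2" using r1 by auto
  show ?thesis
  proof (cases "even r")
    case True
    then obtain m where r: "r = 2*m" by (metis evenE)
    have m: "m \<ge> 1" using r r2 by auto
    show ?thesis
    proof
      assume C: "Cpar r P Q"
      have "P r \<le> Q r" "Q (r+1) \<le> P (r+1)" using C True r2 unfolding Cpar_def by auto
      then have "P r = P (r+1)" using mn mP r2 unfolding monoN_def by auto
      then show ?R
        using True fwd_even[OF r m mP mQ C] by auto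
    next
      assume ?R
      then show "Cpar r P Q" using bwd_even[OF r m] True r by auto
    qed
  next
    case False
    then obtain m where r: "r = 2*m+1" by (metis oddE)
    have m: "m \<ge> 1" using r r2 by auto
    show ?thesis
    proof
      assume C: "Cpar r P Q"
      have "Q r \<le> P r" "P (r+1) \<le> Q (r+1)" using C False r2 unfolding Cpar_def by auto
      then have "Q r = Q (r+1)" using mn mQ r2 unfolding monoN_def by auto
      then show ?R
        using False fwd_odd[OF r m mP mQ C] by auto
    next
      assume ?R
      then show "Cpar r P Q" using bwd_odd[OF r m] False r by auto
    qed
  qed
qed

lemma len_idx:
  assumes "r \<ge> 1"
  shows "length (theta_idx r i) = r + 1" "length (thetap_idx r i) = r"
proof -
  have "length (theta_idx r i) = r + 1 \<and> length (thetap_idx r i) = r"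
  proof (cases "r = 1")
    case True then show ?thesis by (simp add: theta_idx_def thetap_idx_def)
  next
    case False
    show ?thesis
    proof (cases "even r")
      case True
      then obtain m where r: "r = 2*m" by (metis evenE)
      then have "m \<ge> 1" using assms by auto
      then show ?thesis using r len_theta_even len_thetap_even by simp
    next
      case F: False
      then obtain m where r: "r = 2*m+1" by (metis oddE)
      then show ?thesis using r len_theta_odd[of m] len_thetap_odd[of m] by simp
    qed
  qed
  then show "length (theta_idx r i) = r + 1" "length (thetap_idx r i) = r" by auto
qed

lemma interl:
  assumes "length I = length J + 1"
  shows "(sel q J \<prec> sel p I) \<longleftrightarrow>
     (\<forall>k<length J. ent q (J!k) \<le> ent p (I!k) \<and> ent p (I!Suc k) \<le> ent q (J!k))"
proof -
  have e: "ent (sel z idx) \<rho> = ent z (idx!(\<rho>-1))" if "1 \<le> \<rho>" "\<rho> \<le> length idx" for z idx \<rho>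
    using that by (simp add: ent_def sel_def)
  have "(sel q J \<prec> sel p I) \<longleftrightarrow>
     (\<forall>\<rho>\<in>{1..length J}. ent q (J!(\<rho>-1)) \<le> ent p (I!(\<rho>-1)) \<and> ent p (I!\<rho>) \<le> ent q (J!(\<rho>-1)))"
  proof -
    have ls: "length (sel z idx) = length idx" for z idx by (simp add: sel_def)
    have "(sel q J \<prec> sel p I) \<longleftrightarrow> (\<forall>\<rho>\<in>{1..length J}. ent (sel p I) \<rho> \<ge> ent (sel q J) \<rho> \<and> ent (sel q J) \<rho> \<ge> ent (sel p I) (\<rho> + 1))"
      unfolding interlace_def ls using assms by simp
    also have "\<dots> \<longleftrightarrow> (\<forall>\<rho>\<in>{1..length J}. ent q (J!(\<rho>-1)) \<le> ent p (I!(\<rho>-1)) \<and> ent p (I!\<rho>) \<le> ent q (J!(\<rho>-1)))"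
    proof (intro ball_cong refl)
      fix \<rho> assume "\<rho> \<in> {1..length J}"
      then show "(ent (sel p I) \<rho> \<ge> ent (sel q J) \<rho> \<and> ent (sel q J) \<rho> \<ge> ent (sel p I) (\<rho> + 1)) \<longleftrightarrow>
         (ent q (J!(\<rho>-1)) \<le> ent p (I!(\<rho>-1)) \<and> ent p (I!\<rho>) \<le> ent q (J!(\<rho>-1)))"
        using e[of \<rho> J q] e[of \<rho> I p] e[of "\<rho>+1" I p] assms by auto
    qed
    finally show ?thesis .
  qed
  also have "\<dots> \<longleftrightarrow> (\<forall>k<length J. ent q (J!k) \<le> ent p (I!k) \<and> ent p (I!Suc k) \<le> ent q (J!k))"
  proof
    assume h: "\<forall>\<rho>\<in>{1..length J}. ent q (J!(\<rho>-1)) \<le> ent p (I!(\<rho>-1)) \<and> ent p (I!\<rho>) \<le> ent q (J!(\<rho>-1))"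
    show "\<forall>k<length J. ent q (J!k) \<le> ent p (I!k) \<and> ent p (I!Suc k) \<le> ent q (J!k)"
    proof (intro allI impI)
      fix k assume "k < length J" then show "ent q (J!k) \<le> ent p (I!k) \<and> ent p (I!Suc k) \<le> ent q (J!k)"
        using h[rule_format, of "Suc k"] by auto
    qed
  next
    assume h: "\<forall>k<length J. ent q (J!k) \<le> ent p (I!k) \<and> ent p (I!Suc k) \<le> ent q (J!k)"
    show "\<forall>\<rho>\<in>{1..length J}. ent q (J!(\<rho>-1)) \<le> ent p (I!(\<rho>-1)) \<and> ent p (I!\<rho>) \<le> ent q (J!(\<rho>-1))"
    proof
      fix \<rho> assume "\<rho> \<in> {1..length J}" then show "ent q (J!(\<rho>-1)) \<le> ent p (I!(\<rho>-1)) \<and> ent p (I!\<rho>) \<le> ent q (J!(\<rho>-1))"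
        using h[rule_format, of "\<rho>-1"] by auto
    qed
  qed
  finally show ?thesis .
qed

lemma ent_hat:
  assumes "length u = 2*r" "1 \<le> j" "j \<le> 2*r"
  shows "ent (vadd u (vsmult d (evec r))) j = ent u j + (if r < j then d else 0)"
  using assms by (auto simp: ent_def vadd_def vsmult_def evec_def nth_append)

lemma X0_props: "u \<in> X0plus (2*r) \<Longrightarrow> length u = 2*r \<and> monoN r (ent u)"
  by (auto simp: X0plus_def Xplus_def monoN_def)

lemma cond42_Cpar:
  assumes mb: "monoN r (ent b)"
  shows "cond42 r a b \<longleftrightarrow> Cpar r (ent a) (ent b)"
proof
  assume c: "cond42 r a b"
  show "Cpar r (ent a) (ent b)" unfolding Cpar_def
  proof (intro allI impI conjI)
    fix j assume j: "1 \<le> j \<and> j \<le> 2*r"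
    { assume "odd j"
      then obtain k where k: "j = 2*k+1" by (metis oddE)
      have "k+1 \<in> {1..r}" using j k by auto
      from c[unfolded cond42_def, rule_format, OF this] have "ent b (2*(k+1)-1) \<le> ent a (2*(k+1)-1)" by simp
      moreover have "2*(k+1)-1 = j" using k by simp
      ultimately show "ent b j \<le> ent a j" by simp
    }
    { assume "even j"
      then obtain k where k: "j = 2*k" by (metis evenE)
      have "k \<in> {1..r}" using j k by auto
      from c[unfolded cond42_def, rule_format, OF this] k show "ent a j \<le> ent b j" by simp
    }
  qed
next
  assume c: "Cpar r (ent a) (ent b)"
  show "cond42 r a b" unfolding cond42_def
  proof
    fix \<rho> assume \<rho>: "\<rho> \<in> {1..r}"
    have "odd (2*\<rho>-1)" using \<rho> by auto
    then show "ent a (2*\<rho>-1) \<ge> ent b (2*\<rho>-1) \<and> ent b (2*\<rho>-1) \<ge> ent b (2*\<rho>) \<and> ent b (2*\<rho>) \<ge> ent a (2*\<rho>)"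
      using c[unfolded Cpar_def, rule_format, of "2*\<rho>-1"] c[unfolded Cpar_def, rule_format, of "2*\<rho>"]
        mb[unfolded monoN_def, rule_format, of "2*\<rho>-1" "2*\<rho>"] \<rho> \<open>odd (2*\<rho>-1)\<close>
      by (simp add: Suc_leI)
  qed
qed

lemma mono_hat:
  assumes "monoN r a" "d \<le> a r - a (r+1)" "r \<ge> 1"
    and hP: "\<And>j. 1 \<le> j \<Longrightarrow> j \<le> 2*r \<Longrightarrow> P j = a j + (if r < j then d else 0)"
  shows "monoN r P"
  unfolding monoN_def
proof (intro allI impI)
  fix i j assume h: "1 \<le> i \<and> i \<le> j \<and> j \<le> 2 * r"
  show "P j \<le> P i"
  proof (cases "i \<le> r \<and> r < j")
    case True
    have "a j \<le> a (r+1)" "a r \<le> a i" using assms(1) h True unfolding monoN_def by auto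
    then show ?thesis using hP[of i] hP[of j] h True assms(2) by auto
  next
    case False
    have "a j \<le> a i" using assms(1) h unfolding monoN_def by auto
    then show ?thesis using hP[of i] hP[of j] h False by auto
  qed
qed

theorem corollary4p2:
  fixes r :: nat and u v :: "int list"
  assumes "r \<ge> 1" and "u \<in> X0plus (2 * r)" and "v \<in> X0plus (2 * r)"
  shows "let d = min (defect r u) (defect r v);
             uh = vadd u (vsmult d (evec r));
             vh = vadd v (vsmult d (evec r))
         in cond42 r u v \<longleftrightarrow>
            ((if even r then defect r uh = 0 else defect r vh = 0) \<and>
             (\<forall>i\<in>{1,2}. thetap r i vh \<prec> theta r i uh))"
proof -
  define d where "d = min (defect r u) (defect r v)"
  define uh where "uh = vadd u (vsmult d (evec r))"
  define vh where "vh = vadd v (vsmult d (evec r))"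
  have pu: "length u = 2*r" "monoN r (ent u)" using X0_props[OF assms(2)] by auto
  have pv: "length v = 2*r" "monoN r (ent v)" using X0_props[OF assms(3)] by auto
  have hP: "\<And>j. 1 \<le> j \<Longrightarrow> j \<le> 2*r \<Longrightarrow> ent uh j = ent u j + (if r < j then d else 0)"
    unfolding uh_def using ent_hat[OF pu(1)] by auto
  have hQ: "\<And>j. 1 \<le> j \<Longrightarrow> j \<le> 2*r \<Longrightarrow> ent vh j = ent v j + (if r < j then d else 0)"
    unfolding vh_def using ent_hat[OF pv(1)] by auto
  have mP: "monoN r (ent uh)"
    by (rule mono_hat[OF pu(2) _ assms(1) hP]) (auto simp: d_def defect_def)
  have mQ: "monoN r (ent vh)"
    by (rule mono_hat[OF pv(2) _ assms(1) hQ]) (auto simp: d_def defect_def)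
  have r1: "1 \<le> r" "r \<le> 2*r" "1 \<le> r+1" "r+1 \<le> 2*r" using assms(1) by auto
  have du: "defect r uh = defect r u - d" unfolding defect_def using hP[OF r1(1,2)] hP[OF r1(3,4)] by simp
  have dv: "defect r vh = defect r v - d" unfolding defect_def using hQ[OF r1(1,2)] hQ[OF r1(3,4)] by simp
  have mn: "min (ent uh r - ent uh (r+1)) (ent vh r - ent vh (r+1)) = 0"
    using du dv unfolding defect_def d_def by linarith
  have cc: "Cpar r (ent u) (ent v) \<longleftrightarrow> Cpar r (ent uh) (ent vh)"
    unfolding Cpar_def using hP hQ by auto
  have il: "thetap r i vh \<prec> theta r i uh \<longleftrightarrow>
     (\<forall>k<r. ent vh (thetap_idx r i ! k) \<le> ent uh (theta_idx r i ! k) \<and>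
         ent uh (theta_idx r i ! Suc k) \<le> ent vh (thetap_idx r i ! k))" for i
    unfolding theta_def thetap_def using interl[of "theta_idx r i" "thetap_idx r i" vh uh] len_idx[OF assms(1)]
    by simp
  have "cond42 r u v \<longleftrightarrow> Cpar r (ent uh) (ent vh)" using cond42_Cpar[OF pv(2)] cc by simp
  also have "\<dots> \<longleftrightarrow> ((if even r then ent uh r = ent uh (r+1) else ent vh r = ent vh (r+1)) \<and>
     (\<forall>i\<in>{1,2}. \<forall>k<r. ent vh (thetap_idx r i ! k) \<le> ent uh (theta_idx r i ! k) \<and>
         ent uh (theta_idx r i ! Suc k) \<le> ent vh (thetap_idx r i ! k)))"
    by (rule core[OF assms(1) mP mQ mn])
  also have "\<dots> \<longleftrightarrow> ((if even r then defect r uh = 0 else defect r vh = 0) \<and>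
             (\<forall>i\<in>{1,2}. thetap r i vh \<prec> theta r i uh))"
    using il unfolding defect_def by simp
  finally show ?thesis unfolding Let_def d_def[symmetric] uh_def[symmetric] vh_def[symmetric] .
qed
end
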